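(* Let $H$ be a real separable Hilbert space, $k\ge1$, $X$ a measurable space, $\mu_1,\mu_2$ $\sigma$-finite measures on $X$, and $T_1,T_2:X\to\mathcal G_k(H)$ measurable maps. If for every $V\in\mathcal G_k(H)$ and every measurable $A\subset X$ $$\int_A\det\big(\pi_V|_{T_1(x)}\big)\,d\mu_1(x)=\int_A\det\big(\pi_V|_{T_2(x)}\big)\,d\mu_2(x),$$ then $\mu_1=\mu_2$ and $\mu_1(\{x:T_1(x)\ne T_2(x)\})=0$. In particular, if $R\subset H$ is $k$-pseudorectifiable and $(\mu_1,T_1)$, $(\mu_2,T_2)$ are two pairs satisfying the defining identity of pseudorectifiability for $R$, then $\mu_1=\mu_2$ and $T_1=T_2$ $\mu_1$-a.e.
   Context: $\mathcal G_k(H)$ is the set of $k$-dimensional linear subspaces of $H$, metrized by the norm distance between orthogonal projections; $\pi_V$ is orthogonal projection onto $V$; for linear $L$ on a $k$-dimensional subspace $W$, $\det(L|_W)=\sqrt{\det(L^*L)}$ is the metric determinant. A set $R$ with $\mathcal H^k|_R$ $\sigma$-finite is $k$-pseudorectifiable if there exist a measurable $T_R:R\to\mathcal G_k(H)$ and a $\sigma$-finite measure $\mu_R$ mutually absolutely continuous with $\mathcal H^k|_R$ such that for all $V\in\mathcal G_k(H)$ and Borel $A\subset R$: $\int\#(\pi_V^{-1}(y)\cap A)\,d\mathcal H^k(y)=\int_A\det(\pi_V|_{T_R(x)})\,d\mu_R(x)$ (the defining identity). *)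

theory Defs
  imports "HOL-Analysis.Analysis"
begin

definition grass :: "nat \<Rightarrow> ('a::real_inner) set set" where
  "grass k = {V. subspace V \<and> dim V = k}"

definition proj :: "('a::real_inner) set \<Rightarrow> 'a \<Rightarrow> 'a" where
  "proj V x = (THE y. y \<in> V \<and> (\<forall>v\<in>V. inner (x - y) v = 0))"

definition gdist :: "('a::real_inner) set \<Rightarrow> 'a set \<Rightarrow> real" where
  "gdist V W = onorm (\<lambda>x. proj V x - proj W x)"

definition grass_open :: "nat \<Rightarrow> ('a::real_inner) set set \<Rightarrow> bool" where
  "grass_open k U \<longleftrightarrow> U \<subseteq> grass k \<and>
     (\<forall>V\<in>U. \<exists>e>0. \<forall>W\<in>grass k. gdist V W < e \<longrightarrow> W \<in> U)"

definition grass_measure :: "nat \<Rightarrow> ('a::real_inner) set measure" where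
  "grass_measure k = sigma (grass k) {U. grass_open k U}"

definition onb :: "('a::real_inner) set \<Rightarrow> nat \<Rightarrow> (nat \<Rightarrow> 'a) \<Rightarrow> bool" where
  "onb W k b \<longleftrightarrow> (\<forall>i<k. b i \<in> W) \<and>
     (\<forall>i<k. \<forall>j<k. inner (b i) (b j) = (if i = j then 1 else 0)) \<and>
     span (b ` {..<k}) = W"

definition leib_det :: "nat \<Rightarrow> (nat \<Rightarrow> nat \<Rightarrow> real) \<Rightarrow> real" where
  "leib_det k M = (\<Sum>p | p permutes {..<k}. of_int (sign p) * (\<Prod>i<k. M i (p i)))"

text \<open>det(L|_W) = sqrt(det(L^* L)); the matrix of L^* L in an orthonormal basis b of W
  has entries inner (L (b i)) (L (b j)).\<close>
definition mdet :: "('a::real_inner \<Rightarrow> 'a) \<Rightarrow> 'a set \<Rightarrow> real" where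
  "mdet L W = (let k = dim W; b = (SOME b. onb W k b)
               in sqrt (leib_det k (\<lambda>i j. inner (L (b i)) (L (b j)))))"

definition omega :: "nat \<Rightarrow> real" where
  "omega k = pi powr (real k / 2) / Gamma (real k / 2 + 1)"

definition hausdorff_delta :: "nat \<Rightarrow> real \<Rightarrow> ('a::metric_space) set \<Rightarrow> ennreal" where
  "hausdorff_delta k \<delta> A = (INF C \<in> {C :: nat \<Rightarrow> 'a set. A \<subseteq> (\<Union>i. C i) \<and>
       (\<forall>i. bounded (C i) \<and> diameter (C i) \<le> \<delta>)}.
       (\<Sum>i. ennreal (omega k * (diameter (C i) / 2) ^ k)))"

definition hausdorff_outer :: "nat \<Rightarrow> ('a::metric_space) set \<Rightarrow> ennreal" where
  "hausdorff_outer k A = (SUP \<delta> \<in> {0<..}. hausdorff_delta k \<delta> A)"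

definition hausdorff_measure :: "nat \<Rightarrow> ('a::metric_space) measure" where
  "hausdorff_measure k = measure_of UNIV (sets borel) (hausdorff_outer k)"

definition hausdorff_restr :: "nat \<Rightarrow> ('a::metric_space) set \<Rightarrow> 'a measure" where
  "hausdorff_restr k R = measure_of R (sets (restrict_space borel R)) (hausdorff_outer k)"

definition ecard :: "'a set \<Rightarrow> ennreal" where
  "ecard S = (if finite S then of_nat (card S) else \<infinity>)"

definition pseudorect_pair ::
  "nat \<Rightarrow> ('a::{real_inner,complete_space,second_countable_topology}) set
     \<Rightarrow> 'a measure \<Rightarrow> ('a \<Rightarrow> 'a set) \<Rightarrow> bool" where
  "pseudorect_pair k R mu T \<longleftrightarrow>
     sigma_finite_measure (hausdorff_restr k R) \<and>
     space mu = R \<and> sets mu = sets (restrict_space borel R) \<and>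
     sigma_finite_measure mu \<and>
     absolutely_continuous mu (hausdorff_restr k R) \<and>
     absolutely_continuous (hausdorff_restr k R) mu \<and>
     T \<in> mu \<rightarrow>\<^sub>M grass_measure k \<and>
     (\<forall>V\<in>grass k. \<forall>A\<in>sets mu.
        (\<integral>\<^sup>+y. ecard (proj V -` {y} \<inter> A) \<partial>hausdorff_measure k)
        = (\<integral>\<^sup>+x\<in>A. ennreal (mdet (proj V) (T x)) \<partial>mu))"

definition pseudorectifiable :: "nat \<Rightarrow> ('a::{real_inner,complete_space,second_countable_topology}) set \<Rightarrow> bool" where
  "pseudorectifiable k R \<longleftrightarrow> (\<exists>mu T. pseudorect_pair k R mu T)"

end

theory Submission
  imports Defs "Jordan_Normal_Form.Determinant"
begin


lemma span_idx:
  fixes u :: "nat \<Rightarrow> 'a::real_vector"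
  assumes "x \<in> span (u ` {..<n})"
  shows "\<exists>\<beta>. x = (\<Sum>i<n. \<beta> i *\<^sub>R u i)"
proof (rule span_induct_alt[OF assms])
  show "\<exists>\<beta>. 0 = (\<Sum>i<n. \<beta> i *\<^sub>R u i)" by (rule exI[of _ "\<lambda>_. 0"]) simp
next
  fix c x y assume xs: "x \<in> u ` {..<n}" and "\<exists>\<beta>. y = (\<Sum>i<n. \<beta> i *\<^sub>R u i)"
  then obtain j where j: "j < n" "x = u j" by auto
  from \<open>\<exists>\<beta>. _\<close> obtain \<beta> where b: "y = (\<Sum>i<n. \<beta> i *\<^sub>R u i)" by auto
  show "\<exists>\<beta>. c *\<^sub>R x + y = (\<Sum>i<n. \<beta> i *\<^sub>R u i)" 
  proof (rule exI[of _ "\<lambda>i. \<beta> i + (if i = j then c else 0)"])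
    have "(\<Sum>i<n. (\<beta> i + (if i = j then c else 0)) *\<^sub>R u i)
        = (\<Sum>i<n. \<beta> i *\<^sub>R u i) + (\<Sum>i<n. (if i = j then c else 0) *\<^sub>R u i)"
      by (simp add: scaleR_add_left sum.distrib)
    also have "(\<Sum>i<n. (if i = j then c else 0) *\<^sub>R u i) = c *\<^sub>R u j"
      using j by (simp add: if_distrib[of "\<lambda>t. t *\<^sub>R _"] sum.delta cong: if_cong)
    finally show "c *\<^sub>R x + y = (\<Sum>i<n. (\<beta> i + (if i = j then c else 0)) *\<^sub>R u i)"
      using b j by simp
  qed
qed

lemma sum_in_span_idx:
  fixes u :: "nat \<Rightarrow> 'a::real_vector"
  shows "(\<Sum>i<n. \<beta> i *\<^sub>R u i) \<in> span (u ` {..<n})"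
  by (intro span_sum span_scale span_base) auto

definition orthon :: "nat \<Rightarrow> (nat \<Rightarrow> 'a::real_inner) \<Rightarrow> bool" where
  "orthon n e \<longleftrightarrow> (\<forall>i<n. \<forall>j<n. inner (e i) (e j) = (if i = j then 1 else 0))"

lemma fourier:
  fixes e :: "nat \<Rightarrow> 'a::real_inner"
  assumes "orthon n e" "x \<in> span (e ` {..<n})"
  shows "x = (\<Sum>j<n. inner x (e j) *\<^sub>R e j)"
proof -
  obtain \<beta> where b: "x = (\<Sum>i<n. \<beta> i *\<^sub>R e i)" using span_idx[OF assms(2)] by blast
  have "inner x (e j) = \<beta> j" if "j < n" for j
  proof -
    have "inner x (e j) = (\<Sum>i<n. \<beta> i * inner (e i) (e j))"
      unfolding b by (simp add: inner_sum_left)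
    also have "\<dots> = (\<Sum>i<n. (if i = j then \<beta> i else 0))"
      using assms(1) that unfolding orthon_def by (intro sum.cong) auto
    also have "\<dots> = \<beta> j" using that by simp
    finally show ?thesis .
  qed
  then show ?thesis using b by (metis (no_types, lifting) lessThan_iff sum.cong)
qed

lemma onb_orthon: "onb W k b \<Longrightarrow> orthon k b"
  unfolding onb_def orthon_def by auto

definition fi :: "nat \<Rightarrow> (nat \<Rightarrow> 'a::real_vector) \<Rightarrow> bool" where
  "fi n u \<longleftrightarrow> (\<forall>\<alpha>. (\<Sum>i<n. \<alpha> i *\<^sub>R u i) = 0 \<longrightarrow> (\<forall>i<n. \<alpha> i = 0))"

lemma span_idx_mono:
  fixes u :: "nat \<Rightarrow> 'a::real_vector"
  shows "m \<le> n \<Longrightarrow> span (u ` {..<m}) \<subseteq> span (u ` {..<n})"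
  by (intro span_mono image_mono) auto

lemma gs:
  fixes u :: "nat \<Rightarrow> 'a::real_inner"
  assumes fi: "fi n u"
  shows "m \<le> n \<Longrightarrow> \<exists>e. orthon m e \<and>
     (\<forall>i<m. u i \<in> span (e ` {..<Suc i}) \<and> e i \<in> span (u ` {..<Suc i}))"
proof (induction m)
  case 0 show ?case by (auto simp: orthon_def)
next
  case (Suc m)
  then obtain e where o: "orthon m e" and inv: "\<forall>i<m. u i \<in> span (e ` {..<Suc i}) \<and> e i \<in> span (u ` {..<Suc i})"
    by auto
  define r where "r = u m - (\<Sum>l<m. inner (u m) (e l) *\<^sub>R e l)"
  have eu: "span (e ` {..<m}) \<subseteq> span (u ` {..<m})"
  proof (rule span_minimal)
    show "e ` {..<m} \<subseteq> span (u ` {..<m})"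
      using inv span_idx_mono[of "Suc _" m u] by (auto simp: Suc_le_eq)
  qed auto
  have rnz: "r \<noteq> 0"
  proof
    assume "r = 0"
    then have "u m = (\<Sum>l<m. inner (u m) (e l) *\<^sub>R e l)" unfolding r_def by simp
    also have "\<dots> \<in> span (e ` {..<m})" by (rule sum_in_span_idx)
    finally have "u m \<in> span (u ` {..<m})" using eu by auto
    then obtain \<beta> where b: "u m = (\<Sum>i<m. \<beta> i *\<^sub>R u i)" using span_idx by blast
    define \<alpha> where "\<alpha> i = (if i < m then \<beta> i else if i = m then -1 else 0)" for i
    have "(\<Sum>i<n. \<alpha> i *\<^sub>R u i) = (\<Sum>i<Suc m. \<alpha> i *\<^sub>R u i)"
      using Suc.prems by (intro sum.mono_neutral_right) (auto simp: \<alpha>_def)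
    also have "\<dots> = (\<Sum>i<m. \<beta> i *\<^sub>R u i) - u m"
      by (simp add: \<alpha>_def)
    also have "\<dots> = 0" using b by simp
    finally have "\<alpha> m = 0" using fi Suc.prems unfolding fi_def by auto
    then show False by (simp add: \<alpha>_def)
  qed
  define e' where "e' = e(m := r /\<^sub>R norm r)"
  have re: "inner r (e l) = 0" if "l < m" for l
  proof -
    have "inner r (e l) = inner (u m) (e l) - (\<Sum>l'<m. inner (u m) (e l') * inner (e l') (e l))"
      unfolding r_def by (simp add: inner_diff_left inner_sum_left)
    also have "(\<Sum>l'<m. inner (u m) (e l') * inner (e l') (e l)) = (\<Sum>l'<m. if l' = l then inner (u m) (e l) else 0)"
      using o that unfolding orthon_def by (intro sum.cong) auto
    also have "\<dots> = inner (u m) (e l)" using that by simp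
    finally show ?thesis by simp
  qed
  have "orthon (Suc m) e'"
    unfolding orthon_def
  proof (intro allI impI)
    fix i j assume ij: "i < Suc m" "j < Suc m"
    show "inner (e' i) (e' j) = (if i = j then 1 else 0)"
    proof (cases "i = m"; cases "j = m")
      assume "i = m" "j = m" then show ?thesis using rnz
        by (simp add: e'_def dot_square_norm power2_eq_square)
    next
      assume "i = m" "j \<noteq> m" then show ?thesis using re[of j] ij
        by (simp add: e'_def)
    next
      assume "i \<noteq> m" "j = m" then show ?thesis using re[of i] ij
        by (simp add: e'_def inner_commute)
    next
      assume "i \<noteq> m" "j \<noteq> m" then show ?thesis using o ij
        by (simp add: e'_def orthon_def)
    qed
  qed
  moreover have "\<forall>i<Suc m. u i \<in> span (e' ` {..<Suc i}) \<and> e' i \<in> span (u ` {..<Suc i})"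
  proof (intro allI impI)
    fix i assume i: "i < Suc m"
    show "u i \<in> span (e' ` {..<Suc i}) \<and> e' i \<in> span (u ` {..<Suc i})"
    proof (cases "i = m")
      case False
      then have "i < m" using i by auto
      then have "e' ` {..<Suc i} = e ` {..<Suc i}" by (auto simp: e'_def)
      then show ?thesis using inv \<open>i < m\<close> False by (auto simp: e'_def)
    next
      case True
      have "u m = norm r *\<^sub>R e' m + (\<Sum>l<m. inner (u m) (e' l) *\<^sub>R e' l)"
        using rnz by (simp add: e'_def r_def)
      also have "\<dots> \<in> span (e' ` {..<Suc m})"
        by (intro span_add span_scale span_sum span_base) auto
      finally have 1: "u m \<in> span (e' ` {..<Suc m})" .
      have "r \<in> span (u ` {..<Suc m})"
        unfolding r_def
      proof (intro span_diff span_sum span_scale)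
        show "u m \<in> span (u ` {..<Suc m})" by (intro span_base) auto
        fix l assume "l \<in> {..<m}"
        then show "e l \<in> span (u ` {..<Suc m})"
          using inv span_idx_mono[of "Suc l" "Suc m" u] by auto
      qed
      then have "e' m \<in> span (u ` {..<Suc m})" by (simp add: e'_def span_scale)
      then show ?thesis using 1 True by simp
    qed
  qed
  ultimately show ?case by blast
qed

lemma gs_span:
  fixes u :: "nat \<Rightarrow> 'a::real_inner"
  assumes "orthon n e" "\<forall>i<n. u i \<in> span (e ` {..<Suc i}) \<and> e i \<in> span (u ` {..<Suc i})"
  shows "span (e ` {..<n}) = span (u ` {..<n})"
proof
  show "span (e ` {..<n}) \<subseteq> span (u ` {..<n})"
    using assms(2) span_idx_mono[of "Suc _" n u]
    by (intro span_minimal) (auto simp: Suc_le_eq)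
  show "span (u ` {..<n}) \<subseteq> span (e ` {..<n})"
    using assms(2) span_idx_mono[of "Suc _" n e]
    by (intro span_minimal) (auto simp: Suc_le_eq)
qed

lemma fi_of_indep:
  fixes u :: "nat \<Rightarrow> 'a::real_vector"
  assumes "inj_on u {..<n}" "independent (u ` {..<n})"
  shows "fi n u"
  unfolding fi_def
proof (intro allI impI)
  fix \<alpha> i assume s: "(\<Sum>i<n. \<alpha> i *\<^sub>R u i) = 0" and i: "i < n"
  define f where "f v = \<alpha> (the_inv_into {..<n} u v)" for v
  have "(\<Sum>v\<in>u ` {..<n}. f v *\<^sub>R v) = (\<Sum>i<n. f (u i) *\<^sub>R u i)"
    using assms(1) by (simp add: sum.reindex)
  also have "\<dots> = (\<Sum>i<n. \<alpha> i *\<^sub>R u i)"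
    using assms(1) by (intro sum.cong) (auto simp: f_def the_inv_into_f_f)
  finally have "f (u i) = 0" using s i assms(2) by (intro independentD[of "u ` {..<n}"]) auto
  then show "\<alpha> i = 0" using assms(1) i by (simp add: f_def the_inv_into_f_f)
qed

lemma grass_fin:
  assumes "V \<in> grass k" "k \<ge> 1"
  shows "\<exists>b. onb V k b"
proof -
  from assms have sV: "subspace V" and dV: "dim V = k" unfolding grass_def by auto
  obtain B where B: "B \<subseteq> V" "independent B" "V \<subseteq> span B" "card B = dim V"
    using basis_exists by blast
  have fB: "finite B" using B(4) dV assms(2) card.infinite by fastforce
  obtain h where h: "bij_betw h {0..<card B} B" using ex_bij_betw_nat_finite[OF fB] by blast
  have img: "h ` {..<k} = B" and inj: "inj_on h {..<k}"
    using h B(4) dV unfolding bij_betw_def by (simp_all add: lessThan_atLeast0)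
  have "fi k h" using fi_of_indep[OF inj] img B(2) by simp
  then obtain e where e: "orthon k e" "\<forall>i<k. h i \<in> span (e ` {..<Suc i}) \<and> e i \<in> span (h ` {..<Suc i})"
    using gs by blast
  have sp: "span (e ` {..<k}) = V"
    using gs_span[OF e] img B span_subspace[OF B(1) B(3) sV] by simp
  have "onb V k e"
    unfolding onb_def using e(1) sp by (auto simp: orthon_def intro: span_base)
  then show ?thesis by blast
qed

definition bas :: "nat \<Rightarrow> 'a::real_inner set \<Rightarrow> nat \<Rightarrow> 'a" where
  "bas k W = (SOME b. onb W k b)"

lemma bas_onb: "W \<in> grass k \<Longrightarrow> k \<ge> 1 \<Longrightarrow> onb W k (bas k W)"
  unfolding bas_def using grass_fin by (metis someI_ex)

section \<open>Projections\<close>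

lemma proj_char:
  fixes V :: "'a::real_inner set"
  assumes "onb V k c"
  shows "proj V x = (\<Sum>j<k. inner x (c j) *\<^sub>R c j)"
proof -
  define y where "y = (\<Sum>j<k. inner x (c j) *\<^sub>R c j)"
  have o: "orthon k c" using assms by (rule onb_orthon)
  have sp: "span (c ` {..<k}) = V" using assms unfolding onb_def by auto
  have yV: "y \<in> V" unfolding y_def using sum_in_span_idx sp by metis
  have oc: "inner (x - y) (c l) = 0" if "l < k" for l
  proof -
    have "inner y (c l) = (\<Sum>j<k. inner x (c j) * inner (c j) (c l))"
      unfolding y_def by (simp add: inner_sum_left)
    also have "\<dots> = (\<Sum>j<k. if j = l then inner x (c l) else 0)"
      using o that unfolding orthon_def by (intro sum.cong) auto
    also have "\<dots> = inner x (c l)" using that by simp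
    finally show ?thesis by (simp add: inner_diff_left)
  qed
  have ov: "\<forall>v\<in>V. inner (x - y) v = 0"
  proof
    fix v assume "v \<in> V"
    then have "v \<in> span (c ` {..<k})" using sp by simp
    then obtain \<beta> where "v = (\<Sum>i<k. \<beta> i *\<^sub>R c i)" using span_idx by blast
    then show "inner (x - y) v = 0" using oc by (simp add: inner_sum_right)
  qed
  have sV: "subspace V" using sp subspace_span by metis
  show ?thesis
    unfolding proj_def y_def[symmetric]
  proof (rule the_equality)
    show "y \<in> V \<and> (\<forall>v\<in>V. inner (x - y) v = 0)" using yV ov by auto
  next
    fix y' assume y': "y' \<in> V \<and> (\<forall>v\<in>V. inner (x - y') v = 0)"
    have d: "y' - y \<in> V" using y' yV sV by (simp add: subspace_diff)
    have "inner (y' - y) (y' - y) = inner (x - y) (y' - y) - inner (x - y') (y' - y)"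
      by (simp add: inner_diff_left inner_diff_right)
    also have "\<dots> = 0" using ov y' d by simp
    finally show "y' = y" by simp
  qed
qed

lemma proj_props:
  fixes V :: "'a::real_inner set"
  assumes "onb V k c"
  shows "proj V x \<in> V" and "\<And>v. v \<in> V \<Longrightarrow> inner (proj V x) v = inner x v"
    and "bounded_linear (proj V)"
proof -
  have o: "orthon k c" using assms by (rule onb_orthon)
  have sp: "span (c ` {..<k}) = V" using assms unfolding onb_def by auto
  show "proj V x \<in> V" unfolding proj_char[OF assms] using sum_in_span_idx[of "\<lambda>j. inner x (c j)" c k] sp by simp
  fix v assume "v \<in> V"
  then have "v \<in> span (c ` {..<k})" using sp by simp
  then obtain \<beta> where v: "v = (\<Sum>j<k. \<beta> j *\<^sub>R c j)" using span_idx by blast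
  have "inner (proj V x) (c l) = inner x (c l)" if "l < k" for l
  proof -
    have "inner (proj V x) (c l) = (\<Sum>j<k. inner x (c j) * inner (c j) (c l))"
      unfolding proj_char[OF assms] by (simp add: inner_sum_left)
    also have "\<dots> = (\<Sum>j<k. if j = l then inner x (c l) else 0)"
      using o that unfolding orthon_def by (intro sum.cong) auto
    also have "\<dots> = inner x (c l)" using that by simp
    finally show ?thesis .
  qed
  then show "inner (proj V x) v = inner x v"
    unfolding v by (simp add: inner_sum_right)
next
  have "bounded_linear (\<lambda>x. \<Sum>j<k. inner x (c j) *\<^sub>R c j)"
    by (intro bounded_linear_sum bounded_linear_scaleR_const bounded_linear_inner_left)
  moreover have "proj V = (\<lambda>x. \<Sum>j<k. inner x (c j) *\<^sub>R c j)"
    by (rule ext) (rule proj_char[OF assms])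
  ultimately show "bounded_linear (proj V)" by simp
qed

lemma proj_norm:
  fixes V :: "'a::real_inner set"
  assumes "onb V k c"
  shows "norm (proj V x) ^ 2 + norm (x - proj V x) ^ 2 = norm x ^ 2"
proof -
  have "inner (proj V x) (proj V x) = inner x (proj V x)"
    using proj_props(1,2)[OF assms] by blast
  moreover have "inner (x - proj V x) (x - proj V x) = inner x x - 2 * inner x (proj V x) + inner (proj V x) (proj V x)"
    by (simp add: inner_diff_left inner_diff_right inner_commute[of "proj V x" x])
  ultimately show ?thesis
    by (simp only: power2_norm_eq_inner)
qed

lemma proj_norm_le:
  fixes V :: "'a::real_inner set"
  assumes "onb V k c"
  shows "norm (proj V x) \<le> norm x"
proof (rule power2_le_imp_le)
  show "norm (proj V x)^2 \<le> norm x^2"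
    using proj_norm[OF assms, of x] zero_le_power2[of "norm (x - proj V x)"] by linarith
qed simp

lemma proj_norm_eq:
  fixes V :: "'a::real_inner set"
  assumes "onb V k c" "norm (proj V x) = norm x"
  shows "x \<in> V"
proof -
  have "norm (x - proj V x)^2 = 0" using proj_norm[OF assms(1), of x] assms(2) by simp
  then have "x - proj V x = 0" by simp
  then have "x = proj V x" by simp
  then show ?thesis using proj_props(1)[OF assms(1), of x] by simp
qed

section \<open>Gram determinants\<close>

definition gd :: "nat \<Rightarrow> (nat \<Rightarrow> 'a::real_inner) \<Rightarrow> real" where
  "gd k v = leib_det k (\<lambda>i j. inner (v i) (v j))"

definition gm :: "nat \<Rightarrow> (nat \<Rightarrow> nat \<Rightarrow> real) \<Rightarrow> real mat" where
  "gm k f = Matrix.mat k k (\<lambda>(i,j). f i j)"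

lemma gm_carrier[simp]: "gm k f \<in> carrier_mat k k"
  unfolding gm_def by simp

lemma gm_dim[simp]: "dim_row (gm k f) = k" "dim_col (gm k f) = k"
  unfolding gm_def by simp_all

lemma leib_det_gm: "leib_det k f = Determinant.det (gm k f)"
proof -
  have *: "of_int (sign p) * (\<Prod>i = 0..<k. f i (p i)) = of_int (sign p) * (\<Prod>i = 0..<k. Matrix.mat k k (\<lambda>(i, j). f i j) $$ (i, p i))"
    if "p permutes {0..<k}" for p
  proof -
    have "p i < k" if "i < k" for i using permutes_in_image[OF \<open>p permutes _\<close>, of i] that by simp
    then show ?thesis
      by (intro arg_cong[where f="\<lambda>t. of_int (sign p) * t"] prod.cong) (auto simp: lessThan_atLeast0)
  qed
  show ?thesis
    unfolding leib_det_def Determinant.det_def gm_def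
    using * by (simp add: lessThan_atLeast0)
qed

lemma mdet_eq:
  assumes "W \<in> grass k"
  shows "mdet L W = sqrt (gd k (\<lambda>i. L (bas k W i)))"
proof -
  have "dim W = k" using assms unfolding grass_def by simp
  then show ?thesis unfolding mdet_def gd_def bas_def Let_def by simp
qed

lemma gm_mult_transp:
  "(gm k A * gm k G * transpose_mat (gm k A)) = gm k (\<lambda>i j. \<Sum>l<k. \<Sum>m<k. A i l * A j m * G l m)"
proof (rule eq_matI)
  fix i j assume ij: "i < dim_row (gm k (\<lambda>i j. \<Sum>l<k. \<Sum>m<k. A i l * A j m * G l m))"
    "j < dim_col (gm k (\<lambda>i j. \<Sum>l<k. \<Sum>m<k. A i l * A j m * G l m))"
  then have "i < k" "j < k" by (auto simp: gm_def)
  then show "(gm k A * gm k G * transpose_mat (gm k A)) $$ (i, j) = gm k (\<lambda>i j. \<Sum>l<k. \<Sum>m<k. A i l * A j m * G l m) $$ (i, j)"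
    apply (simp add: gm_def scalar_prod_def lessThan_atLeast0 sum_distrib_right)
    apply (subst sum.swap)
    apply (intro sum.cong refl)
    apply (simp add: mult_ac)
    done
qed (auto simp: gm_def)


lemma gm_cong: "(\<And>i j. i < k \<Longrightarrow> j < k \<Longrightarrow> f i j = g i j) \<Longrightarrow> gm k f = gm k g"
  unfolding gm_def by (rule eq_matI) auto

lemma gd_change:
  fixes d e :: "nat \<Rightarrow> 'a::real_inner"
  assumes "\<forall>i<k. d i = (\<Sum>l<k. A i l *\<^sub>R e l)"
  shows "gd k d = (Determinant.det (gm k A))^2 * gd k e"
proof -
  have "gm k (\<lambda>i j. inner (d i) (d j)) = gm k (\<lambda>i j. \<Sum>l<k. \<Sum>m<k. A i l * A j m * inner (e l) (e m))"
  proof (rule gm_cong)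
    fix i j assume "i < k" "j < k"
    then show "inner (d i) (d j) = (\<Sum>l<k. \<Sum>m<k. A i l * A j m * inner (e l) (e m))"
      using assms by (simp add: inner_sum_left inner_sum_right sum_distrib_left mult_ac) (rule sum.swap)
  qed
  also have "\<dots> = gm k A * gm k (\<lambda>i j. inner (e i) (e j)) * transpose_mat (gm k A)"
    by (rule gm_mult_transp[symmetric])
  finally have "gd k d = Determinant.det (gm k A * gm k (\<lambda>i j. inner (e i) (e j)) * transpose_mat (gm k A))"
    unfolding gd_def leib_det_gm by simp
  also have "\<dots> = Determinant.det (gm k A * gm k (\<lambda>i j. inner (e i) (e j))) * Determinant.det (transpose_mat (gm k A))"
    by (rule det_mult[of _ k]) (auto intro: mult_carrier_mat)
  also have "\<dots> = Determinant.det (gm k A) * gd k e * Determinant.det (gm k A)"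
    by (simp add: det_mult[of _ k] det_transpose[of _ k] gd_def leib_det_gm)
  finally show ?thesis by (simp add: power2_eq_square)
qed

lemma gd_orthon: "orthon k e \<Longrightarrow> gd k e = 1"
proof -
  assume o: "orthon k e"
  have "gm k (\<lambda>i j. inner (e i) (e j)) = 1\<^sub>m k"
    using o unfolding gm_def orthon_def by (intro eq_matI) auto
  then show ?thesis unfolding gd_def leib_det_gm by simp
qed

lemma gd_dep:
  fixes u :: "nat \<Rightarrow> 'a::real_inner"
  assumes "\<not> fi k u"
  shows "gd k u = 0"
proof -
  obtain \<alpha> i where a: "(\<Sum>i<k. \<alpha> i *\<^sub>R u i) = 0" "i < k" "\<alpha> i \<noteq> 0"
    using assms unfolding fi_def by auto
  let ?v = "Matrix.vec k \<alpha>"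
  have "?v \<noteq> 0\<^sub>v k" using a by (metis index_vec index_zero_vec(1))
  moreover have "gm k (\<lambda>i j. inner (u i) (u j)) *\<^sub>v ?v = 0\<^sub>v k"
  proof (rule eq_vecI)
    fix j assume "j < dim_vec (0\<^sub>v k :: real Matrix.vec)"
    then have j: "j < k" by simp
    have "Matrix.vec_index (gm k (\<lambda>i j. inner (u i) (u j)) *\<^sub>v ?v) j = (\<Sum>l<k. inner (u j) (u l) * \<alpha> l)"
      using j by (simp add: gm_def scalar_prod_def lessThan_atLeast0)
    also have "\<dots> = inner (u j) (\<Sum>l<k. \<alpha> l *\<^sub>R u l)"
      by (simp add: inner_sum_right mult.commute)
    also have "\<dots> = 0" using a by simp
    finally show "Matrix.vec_index (gm k (\<lambda>i j. inner (u i) (u j)) *\<^sub>v ?v) j = Matrix.vec_index (0\<^sub>v k) j" using j by simp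
  qed simp
  ultimately have "Determinant.det (gm k (\<lambda>i j. inner (u i) (u j))) = 0"
    by (subst det_0_iff_vec_prod_zero[of _ k]) (auto intro!: exI[of _ ?v])
  then show ?thesis unfolding gd_def leib_det_gm .
qed

lemma det_lower:
  assumes "\<And>i j. i < j \<Longrightarrow> j < k \<Longrightarrow> A i j = 0"
  shows "Determinant.det (gm k A) = (\<Prod>i<k. A i i)"
proof -
  have "Determinant.det (gm k A) = prod_list (diag_mat (gm k A))"
    by (rule det_lower_triangular[of k]) (auto simp: gm_def assms)
  also have "diag_mat (gm k A) = map (\<lambda>i. A i i) [0..<k]"
    by (auto simp: diag_mat_def gm_def)
  also have "prod_list (map (\<lambda>i. A i i) [0..<k]) = (\<Prod>i<k. A i i)"
    by (induct k) auto
  finally show ?thesis .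
qed


lemma orthon_norm: "orthon k e \<Longrightarrow> i < k \<Longrightarrow> norm (e i) = 1"
  unfolding orthon_def by (simp add: norm_eq_sqrt_inner)

lemma F_det:
  fixes V W :: "'a::real_inner set"
  assumes "W \<in> grass k" "onb V k c"
  shows "mdet (proj V) W = \<bar>Determinant.det (gm k (\<lambda>i j. inner (bas k W i) (c j)))\<bar>"
proof -
  have "gd k (\<lambda>i. proj V (bas k W i)) = (Determinant.det (gm k (\<lambda>i j. inner (bas k W i) (c j))))^2 * gd k c"
    by (rule gd_change) (simp add: proj_char[OF assms(2)])
  also have "gd k c = 1" using gd_orthon onb_orthon[OF assms(2)] by blast
  finally show ?thesis using mdet_eq[OF assms(1)] by simp
qed

lemma gm_transp: "gm k (\<lambda>i j. f j i) = transpose_mat (gm k f)"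
  unfolding gm_def by (rule eq_matI) auto

lemma F_sym:
  fixes V W :: "'a::real_inner set"
  assumes "V \<in> grass k" "W \<in> grass k" "k \<ge> 1"
  shows "mdet (proj V) W = mdet (proj W) V"
proof -
  have "mdet (proj V) W = \<bar>Determinant.det (gm k (\<lambda>i j. inner (bas k W i) (bas k V j)))\<bar>"
    using F_det[OF assms(2) bas_onb[OF assms(1,3)]] .
  also have "gm k (\<lambda>i j. inner (bas k W i) (bas k V j)) = transpose_mat (gm k (\<lambda>i j. inner (bas k V i) (bas k W j)))"
    by (subst gm_transp[symmetric]) (simp add: inner_commute)
  also have "\<bar>Determinant.det \<dots>\<bar> = mdet (proj W) V"
    using F_det[OF assms(1) bas_onb[OF assms(2,3)]] det_transpose[OF gm_carrier] by simp
  finally show ?thesis .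
qed

lemma F_refl:
  fixes V :: "'a::real_inner set"
  assumes "V \<in> grass k" "k \<ge> 1"
  shows "mdet (proj V) V = 1"
proof -
  have o: "orthon k (bas k V)" using onb_orthon bas_onb[OF assms] by blast
  have "gm k (\<lambda>i j. inner (bas k V i) (bas k V j)) = 1\<^sub>m k"
    using o unfolding gm_def orthon_def by (intro eq_matI) auto
  then show ?thesis using F_det[OF assms(1) bas_onb[OF assms]] by simp
qed

lemma prod_le_one_elem:
  fixes x :: "nat \<Rightarrow> real"
  assumes "\<And>i. i < k \<Longrightarrow> 0 \<le> x i \<and> x i \<le> 1" "m < k"
  shows "(\<Prod>i<k. x i) \<le> x m"
proof -
  have "(\<Prod>i<k. x i) = x m * (\<Prod>i\<in>{..<k} - {m}. x i)"
    using assms(2) by (simp add: prod.remove)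
  also have "\<dots> \<le> x m * 1"
    using assms by (intro mult_left_mono prod_le_1) auto
  finally show ?thesis by simp
qed

lemma F_one_sub:
  fixes V W :: "'a::real_inner set"
  assumes "V \<in> grass k" "W \<in> grass k" "k \<ge> 1" "mdet (proj V) W = 1"
  shows "W \<subseteq> V"
proof -
  define b where "b = bas k W"
  define u where "u i = proj V (b i)" for i
  have onbV: "onb V k (bas k V)" using bas_onb[OF assms(1,3)] .
  have onbW: "onb W k b" using bas_onb[OF assms(2,3)] unfolding b_def .
  have gu: "gd k u = 1" using assms(4) mdet_eq[OF assms(2)] unfolding u_def b_def by simp
  then have fiu: "fi k u" using gd_dep by fastforce
  obtain e where e: "orthon k e" "\<forall>i<k. u i \<in> span (e ` {..<Suc i}) \<and> e i \<in> span (u ` {..<Suc i})"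
    using gs[OF fiu, of k] by blast
  define A where "A i j = inner (u i) (e j)" for i j
  have rep: "\<forall>i<k. u i = (\<Sum>l<k. A i l *\<^sub>R e l)"
  proof (intro allI impI)
    fix i assume "i < k"
    then have "u i \<in> span (e ` {..<k})"
      using e(2) span_idx_mono[of "Suc i" k e] by auto
    then show "u i = (\<Sum>l<k. A i l *\<^sub>R e l)" unfolding A_def using fourier[OF e(1)] by blast
  qed
  have low: "A i j = 0" if "i < j" "j < k" for i j
  proof -
    have "u i \<in> span (e ` {..<Suc i})" using e(2) that by auto
    then obtain \<beta> where bb: "u i = (\<Sum>l<Suc i. \<beta> l *\<^sub>R e l)" using span_idx by blast
    have "A i j = (\<Sum>l<Suc i. \<beta> l * inner (e l) (e j))"
      unfolding A_def bb by (simp only: inner_sum_left inner_scaleR_left)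
    also have "\<dots> = 0" using e(1) that unfolding orthon_def by (intro sum.neutral) auto
    finally show ?thesis .
  qed
  have "gd k u = (Determinant.det (gm k A))^2 * gd k e" by (rule gd_change[OF rep])
  also have "gd k e = 1" by (rule gd_orthon[OF e(1)])
  also have "Determinant.det (gm k A) = (\<Prod>i<k. A i i)" by (rule det_lower) (rule low)
  finally have p1: "(\<Prod>i<k. (A i i)^2) = 1" using gu by (simp add: prod_power_distrib)
  have nb: "norm (b i) = 1" if "i < k" for i using orthon_norm[OF onb_orthon[OF onbW] that] .
  have Ale: "(A i i)^2 \<le> norm (u i)^2" if "i < k" for i
  proof -
    have "\<bar>A i i\<bar> \<le> norm (u i) * norm (e i)" unfolding A_def by (rule Cauchy_Schwarz_ineq2)
    then have "\<bar>A i i\<bar> \<le> norm (u i)" using orthon_norm[OF e(1) that] by simp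
    then show ?thesis by (metis abs_ge_zero power2_abs power_mono)
  qed
  have ule: "norm (u i) \<le> 1" if "i < k" for i
    using proj_norm_le[OF onbV, of "b i"] nb[OF that] unfolding u_def by simp
  have un: "norm (u i) = 1" if "i < k" for i
  proof (rule ccontr)
    assume "norm (u i) \<noteq> 1"
    then have "norm (u i) < 1" using ule[OF that] by simp
    then have "norm (u i)^2 < 1" by (simp add: power_less_one_iff)
    moreover have "(\<Prod>i<k. (A i i)^2) \<le> (A i i)^2"
    proof (rule prod_le_one_elem[OF _ that])
      fix j assume "j < k"
      then show "0 \<le> (A j j)^2 \<and> (A j j)^2 \<le> 1"
        using Ale[of j] ule[of j] by (smt (verit) norm_ge_zero power_le_one zero_le_power2)
    qed
    ultimately show False using p1 Ale[OF that] by linarith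
  qed
  have bV: "b i \<in> V" if "i < k" for i
    using proj_norm_eq[OF onbV] un[OF that] nb[OF that] unfolding u_def by simp
  have sV: "subspace V" using assms(1) unfolding grass_def by simp
  have "W = span (b ` {..<k})" using onbW unfolding onb_def by simp
  also have "\<dots> \<subseteq> V" using bV sV by (intro span_minimal) auto
  finally show ?thesis .
qed

lemma F_inj:
  fixes V W :: "'a::real_inner set"
  assumes "V \<in> grass k" "W \<in> grass k" "k \<ge> 1" "mdet (proj V) W = 1"
  shows "V = W"
  using F_one_sub[OF assms] F_one_sub[OF assms(2,1,3)] assms(4) F_sym[OF assms(1-3)] by auto



lemma gd_tendsto:
  fixes v :: "nat \<Rightarrow> nat \<Rightarrow> 'a::real_inner"
  assumes "\<And>i. i < k \<Longrightarrow> (\<lambda>n. v n i) \<longlonglongrightarrow> w i"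
  shows "(\<lambda>n. gd k (v n)) \<longlonglongrightarrow> gd k w"
  unfolding gd_def leib_det_def
proof (intro tendsto_sum tendsto_mult_left tendsto_prod tendsto_inner)
  fix p i assume p: "p \<in> {p. p permutes {..<k}}" and i: "i \<in> {..<k}"
  then show "(\<lambda>n. v n i) \<longlonglongrightarrow> w i" using assms by auto
  have "p i \<in> {..<k}" using p i permutes_in_image by fastforce
  then show "(\<lambda>n. v n (p i)) \<longlonglongrightarrow> w (p i)" using assms by auto
qed

lemma proj_bl: "V \<in> grass k \<Longrightarrow> k \<ge> 1 \<Longrightarrow> bounded_linear (proj V)"
  using proj_props(3)[OF bas_onb] by blast

lemma gdist_nonneg: "V \<in> grass k \<Longrightarrow> W \<in> grass k \<Longrightarrow> k \<ge> 1 \<Longrightarrow> 0 \<le> gdist V W"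
  unfolding gdist_def by (intro onorm_pos_le bounded_linear_sub proj_bl)

lemma proj_tendsto:
  assumes "V \<in> grass k" "\<And>n. Z n \<in> grass k" "k \<ge> 1" "(\<lambda>n. gdist V (Z n)) \<longlonglongrightarrow> 0"
  shows "(\<lambda>n. proj (Z n) y) \<longlonglongrightarrow> proj V y"
proof -
  have "(\<lambda>n. proj V y - proj (Z n) y) \<longlonglongrightarrow> 0"
  proof (rule Lim_null_comparison)
    show "\<forall>\<^sub>F n in sequentially. norm (proj V y - proj (Z n) y) \<le> gdist V (Z n) * norm y"
      unfolding gdist_def using assms
      by (intro always_eventually allI onorm[where f="\<lambda>x. proj V x - proj (Z _) x"]
          bounded_linear_sub proj_bl) auto
    show "(\<lambda>n. gdist V (Z n) * norm y) \<longlonglongrightarrow> 0"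
      using tendsto_mult_left_zero[OF assms(4)] by simp
  qed
  then have "(\<lambda>n. proj V y - (proj V y - proj (Z n) y)) \<longlonglongrightarrow> proj V y - 0"
    by (intro tendsto_diff tendsto_const)
  then show ?thesis by simp
qed

lemma gd_proj_nonneg:
  assumes "Z \<in> grass k" "k \<ge> 1"
  shows "0 \<le> gd k (\<lambda>i. proj Z (v i))"
proof -
  have "gd k (\<lambda>i. proj Z (v i)) = (Determinant.det (gm k (\<lambda>i j. inner (v i) (bas k Z j))))^2 * gd k (bas k Z)"
    by (rule gd_change) (simp add: proj_char[OF bas_onb[OF assms]])
  then show ?thesis using gd_orthon[OF onb_orthon[OF bas_onb[OF assms]]] by simp
qed

lemma F_cont2:
  assumes "V \<in> grass k" "Z \<in> grass k" "\<And>n. Zs n \<in> grass k" "k \<ge> 1"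
    "(\<lambda>n. gdist Z (Zs n)) \<longlonglongrightarrow> 0"
  shows "(\<lambda>n. mdet (proj V) (Zs n)) \<longlonglongrightarrow> mdet (proj V) Z"
proof -
  have "(\<lambda>n. sqrt (gd k (\<lambda>i. proj (Zs n) (bas k V i)))) \<longlonglongrightarrow> sqrt (gd k (\<lambda>i. proj Z (bas k V i)))"
    by (intro tendsto_real_sqrt gd_tendsto proj_tendsto[OF assms(2,3,4,5)])
  then show ?thesis
    using F_sym[OF assms(1) assms(3) assms(4)] F_sym[OF assms(1,2,4)] mdet_eq[OF assms(1)] by simp
qed

lemma grass_measure_space: "space (grass_measure k) = grass k"
  unfolding grass_measure_def by (rule space_measure_of) (auto simp: grass_open_def)

lemma grass_measure_sets_open: "grass_open k U \<Longrightarrow> U \<in> sets (grass_measure k)"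
  unfolding grass_measure_def
  by (subst sets_measure_of) (auto simp: grass_open_def)

lemma F_meas:
  fixes V :: "'a::real_inner set"
  assumes "V \<in> grass k" "k \<ge> 1" "T \<in> M \<rightarrow>\<^sub>M grass_measure k"
  shows "(\<lambda>x. mdet (proj V) (T x)) \<in> borel_measurable M"
proof -
  have "mdet (proj V) \<in> borel_measurable (grass_measure k)"
  proof (rule borel_measurableI)
    fix S :: "real set" assume S: "open S"
    have "grass_open k (mdet (proj V) -` S \<inter> grass k)"
      unfolding grass_open_def
    proof (intro conjI ballI)
      fix Z assume Z: "Z \<in> mdet (proj V) -` S \<inter> grass k"
      show "\<exists>e>0. \<forall>W\<in>grass k. gdist Z W < e \<longrightarrow> W \<in> mdet (proj V) -` S \<inter> grass k"
      proof (rule ccontr)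
        assume "\<not> ?thesis"
        then have "\<forall>n. \<exists>W\<in>grass k. gdist Z W < 1 / (Suc n) \<and> W \<notin> mdet (proj V) -` S"
        proof (intro allI)
          fix n assume a: "\<not> (\<exists>e>0. \<forall>W\<in>grass k. gdist Z W < e \<longrightarrow> W \<in> mdet (proj V) -` S \<inter> grass k)"
          have "1 / real (Suc n) > 0" by simp
          then show "\<exists>W\<in>grass k. gdist Z W < 1 / (Suc n) \<and> W \<notin> mdet (proj V) -` S"
            using a by blast
        qed
        then obtain Zs where Zs: "\<And>n. Zs n \<in> grass k" "\<And>n. gdist Z (Zs n) < 1 / (Suc n)"
          "\<And>n. mdet (proj V) (Zs n) \<notin> S"
          unfolding Bex_def vimage_def by (metis (mono_tags, lifting) mem_Collect_eq)
        have "(\<lambda>n. gdist Z (Zs n)) \<longlonglongrightarrow> 0"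
        proof (rule real_tendsto_sandwich[of "\<lambda>_. 0" _ _ "\<lambda>n. 1 / real (Suc n)"])
          show "\<forall>\<^sub>F n in sequentially. 0 \<le> gdist Z (Zs n)"
            using gdist_nonneg[of Z k "Zs _"] Z Zs(1) assms(2) by (intro always_eventually) auto
          show "\<forall>\<^sub>F n in sequentially. gdist Z (Zs n) \<le> 1 / real (Suc n)"
            using Zs(2) less_imp_le by (intro always_eventually allI) (simp add: less_imp_le)
          show "(\<lambda>n. 1 / real (Suc n)) \<longlonglongrightarrow> 0" using LIMSEQ_inverse_real_of_nat by (simp add: inverse_eq_divide)
        qed simp
        then have "(\<lambda>n. mdet (proj V) (Zs n)) \<longlonglongrightarrow> mdet (proj V) Z"
          using F_cont2[OF assms(1) _ Zs(1) assms(2)] Z by auto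
        then have "\<forall>\<^sub>F n in sequentially. mdet (proj V) (Zs n) \<in> S"
          using S Z by (auto dest: topological_tendstoD)
        then show False using Zs(3) by auto
      qed
    qed auto
    then show "mdet (proj V) -` S \<inter> space (grass_measure k) \<in> sets (grass_measure k)"
      using grass_measure_sets_open grass_measure_space by metis
  qed
  then show ?thesis using assms(3) by (rule measurable_compose[rotated])
qed



definition cden :: "'a::{real_inner,second_countable_topology} set" where
  "cden = (SOME D. countable D \<and> (\<forall>X. open X \<longrightarrow> X \<noteq> {} \<longrightarrow> (\<exists>d\<in>D. d \<in> X)))"

lemma cden: "countable (cden :: 'a::{real_inner,second_countable_topology} set)"
  "open (X::'a set) \<Longrightarrow> X \<noteq> {} \<Longrightarrow> \<exists>d\<in>cden. d \<in> X"
  using someI_ex[OF countable_dense_exists] unfolding cden_def by blast+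

definition Dset :: "nat \<Rightarrow> 'a::{real_inner,second_countable_topology} set set" where
  "Dset k = {V \<in> grass k. \<exists>cs. set cs \<subseteq> cden \<and> V = span (set cs)}"

lemma Dset_countable: "countable (Dset k)"
proof -
  have "Dset k \<subseteq> (\<lambda>cs. span (set cs)) ` lists cden" unfolding Dset_def by auto
  then show ?thesis using countable_lists[OF cden(1)] countable_image countable_subset by metis
qed

lemma Dset_grass: "Dset k \<subseteq> grass k" unfolding Dset_def by auto

lemma fi_grass:
  fixes c :: "nat \<Rightarrow> 'a::real_inner"
  assumes "fi k c"
  shows "span (c ` {..<k}) \<in> grass k"
proof -
  have inj: "inj_on c {..<k}"
  proof (rule inj_onI)
    fix i j assume ij: "i \<in> {..<k}" "j \<in> {..<k}" "c i = c j"
    show "i = j"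
    proof (rule ccontr)
      assume ne: "i \<noteq> j"
      define \<alpha> where "\<alpha> l = (if l = i then 1 else if l = j then -1 else (0::real))" for l
      have "(\<Sum>l<k. \<alpha> l *\<^sub>R c l) = (\<Sum>l\<in>{i,j}. \<alpha> l *\<^sub>R c l)"
        using ij by (intro sum.mono_neutral_right) (auto simp: \<alpha>_def)
      also have "\<dots> = 0" using ne ij by (simp add: \<alpha>_def)
      finally have "\<alpha> i = 0" using assms ij unfolding fi_def by blast
      then show False by (simp add: \<alpha>_def)
    qed
  qed
  have ind: "independent (c ` {..<k})"
  proof (rule independent_if_scalars_zero)
    fix f x assume s: "(\<Sum>x\<in>c ` {..<k}. f x *\<^sub>R x) = 0" and x: "x \<in> c ` {..<k}"
    have "(\<Sum>i<k. f (c i) *\<^sub>R c i) = 0" using s inj by (simp add: sum.reindex)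
    obtain i where "i < k" "x = c i" using x by auto
    moreover have "\<forall>i<k. f (c i) = 0"
      using assms[unfolded fi_def, rule_format, of "\<lambda>i. f (c i)"] \<open>(\<Sum>i<k. f (c i) *\<^sub>R c i) = 0\<close> by blast
    ultimately show "f x = 0" by simp
  qed simp
  have "dim (span (c ` {..<k})) = k"
    using dim_span_eq_card_independent[OF ind] card_image[OF inj] by simp
  then show ?thesis unfolding grass_def by simp
qed

lemma F_basis:
  fixes c :: "nat \<Rightarrow> 'a::real_inner"
  assumes V: "V = span (c ` {..<k})" "V \<in> grass k" and Z: "Z \<in> grass k" and k: "k \<ge> 1"
  shows "gd k (\<lambda>i. proj Z (c i)) = gd k c * (mdet (proj Z) V)^2"
proof -
  define e where "e = bas k V"
  have onb: "onb V k e" unfolding e_def by (rule bas_onb[OF V(2) k])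
  define A where "A i l = inner (c i) (e l)" for i l
  have rep: "\<forall>i<k. c i = (\<Sum>l<k. A i l *\<^sub>R e l)"
  proof (intro allI impI)
    fix i assume "i < k"
    then have "c i \<in> span (e ` {..<k})" using onb V(1) unfolding onb_def by (auto intro: span_base)
    then show "c i = (\<Sum>l<k. A i l *\<^sub>R e l)" unfolding A_def using fourier[OF onb_orthon[OF onb]] by blast
  qed
  have lin: "linear (proj Z)" using proj_bl[OF Z k] bounded_linear.linear by blast
  have rep2: "\<forall>i<k. proj Z (c i) = (\<Sum>l<k. A i l *\<^sub>R proj Z (e l))"
    using rep by (simp add: linear_sum[OF lin] linear_cmul[OF lin])
  have "gd k (\<lambda>i. proj Z (c i)) = (Determinant.det (gm k A))^2 * gd k (\<lambda>i. proj Z (e i))"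
    by (rule gd_change[OF rep2])
  moreover have "gd k c = (Determinant.det (gm k A))^2" using gd_change[OF rep] gd_orthon[OF onb_orthon[OF onb]] by simp
  moreover have "(mdet (proj Z) V)^2 = gd k (\<lambda>i. proj Z (e i))"
    using mdet_eq[OF V(2), of "proj Z"] gd_proj_nonneg[OF Z k] unfolding e_def by simp
  ultimately show ?thesis by simp
qed

lemma approx:
  fixes W :: "'a::{real_inner,second_countable_topology} set"
  assumes W: "W \<in> grass k" and k: "k \<ge> 1"
  shows "\<exists>Vs. (\<forall>\<^sub>F n in sequentially. Vs n \<in> Dset k) \<and>
     (\<forall>Z\<in>grass k. (\<lambda>n. mdet (proj (Vs n)) Z) \<longlonglongrightarrow> mdet (proj W) Z)"
proof -
  define b where "b = bas k W"
  have onbW: "onb W k b" unfolding b_def by (rule bas_onb[OF W k])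
  have "\<forall>n i. \<exists>x\<in>cden. dist x (b i) < 1 / real (Suc n)"
  proof (intro allI)
    fix n i
    have "open (ball (b i) (1 / real (Suc n)))" "ball (b i) (1 / real (Suc n)) \<noteq> {}" by auto
    then obtain x where "x \<in> cden" "x \<in> ball (b i) (1 / real (Suc n))" using cden(2) by blast
    then show "\<exists>x\<in>cden. dist x (b i) < 1 / real (Suc n)" by (auto simp: dist_commute)
  qed
  then obtain c where c: "\<And>n i. c n i \<in> cden" "\<And>n i. dist (c n i) (b i) < 1 / real (Suc n)"
    by metis
  have ct: "(\<lambda>n. c n i) \<longlonglongrightarrow> b i" for i
  proof (rule tendstoI)
    fix \<epsilon> :: real assume "\<epsilon> > 0"
    then obtain N where N: "inverse (real (Suc N)) < \<epsilon>" using reals_Archimedean by blast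
    show "\<forall>\<^sub>F n in sequentially. dist (c n i) (b i) < \<epsilon>"
    proof (rule eventually_sequentiallyI[of N])
      fix n assume "N \<le> n"
      then have "1 / real (Suc n) \<le> inverse (real (Suc N))"
        by (simp add: inverse_eq_divide frac_le)
      then show "dist (c n i) (b i) < \<epsilon>" using c(2)[of n i] N by linarith
    qed
  qed
  define Vs where "Vs n = span (c n ` {..<k})" for n
  have gdc: "(\<lambda>n. gd k (c n)) \<longlonglongrightarrow> gd k b" by (rule gd_tendsto[OF ct])
  have gdb: "gd k b = 1" by (rule gd_orthon[OF onb_orthon[OF onbW]])
  have ev: "\<forall>\<^sub>F n in sequentially. gd k (c n) > 1/2"
    using order_tendstoD(1)[OF gdc[unfolded gdb], of "1/2"] by simp
  have evD: "\<forall>\<^sub>F n in sequentially. fi k (c n) \<and> Vs n \<in> grass k"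
    using ev
  proof (rule eventually_mono)
    fix n assume "gd k (c n) > 1/2"
    then have "fi k (c n)" using gd_dep by fastforce
    then show "fi k (c n) \<and> Vs n \<in> grass k" unfolding Vs_def using fi_grass by blast
  qed
  have "\<forall>\<^sub>F n in sequentially. Vs n \<in> Dset k"
    using evD
  proof (rule eventually_mono)
    fix n assume "fi k (c n) \<and> Vs n \<in> grass k"
    moreover have "Vs n = span (set (map (c n) [0..<k]))" unfolding Vs_def by (simp add: lessThan_atLeast0)
    moreover have "set (map (c n) [0..<k]) \<subseteq> cden" using c(1) by auto
    ultimately show "Vs n \<in> Dset k" unfolding Dset_def by blast
  qed
  moreover have "(\<lambda>n. mdet (proj (Vs n)) Z) \<longlonglongrightarrow> mdet (proj W) Z" if Z: "Z \<in> grass k" for Z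
  proof -
    have mnn: "\<And>V. V \<in> grass k \<Longrightarrow> mdet (proj Z) V \<ge> 0"
      using mdet_eq[of _ k "proj Z"] gd_proj_nonneg[OF Z k] by simp
    have e1: "\<forall>\<^sub>F n in sequentially. (mdet (proj Z) (Vs n))^2 = gd k (\<lambda>i. proj Z (c n i)) / gd k (c n)"
      using eventually_conj[OF evD ev]
    proof (rule eventually_mono)
      fix n assume a: "(fi k (c n) \<and> Vs n \<in> grass k) \<and> gd k (c n) > 1/2"
      then have "gd k (\<lambda>i. proj Z (c n i)) = gd k (c n) * (mdet (proj Z) (Vs n))^2"
        using F_basis[OF Vs_def[of n] _ Z k] by simp
      then show "(mdet (proj Z) (Vs n))^2 = gd k (\<lambda>i. proj Z (c n i)) / gd k (c n)"
        using a by (metis (no_types, lifting) nonzero_eq_divide_eq mult.commute less_numeral_extra(3) order_less_trans zero_less_divide_1_iff zero_less_numeral)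
    qed
    have t1: "(\<lambda>n. gd k (\<lambda>i. proj Z (c n i))) \<longlonglongrightarrow> gd k (\<lambda>i. proj Z (b i))"
      by (rule gd_tendsto) (rule bounded_linear.tendsto[OF proj_bl[OF Z k] ct])
    have r: "(\<lambda>n. gd k (\<lambda>i. proj Z (c n i)) / gd k (c n)) \<longlonglongrightarrow> gd k (\<lambda>i. proj Z (b i)) / gd k b"
      using gdb by (intro tendsto_divide t1 gdc) auto
    have q: "gd k (\<lambda>i. proj Z (b i)) / gd k b = (mdet (proj Z) W)^2"
      using mdet_eq[OF W, of "proj Z"] gd_proj_nonneg[OF Z k, of b] gdb unfolding b_def by simp
    have s1: "(\<lambda>n. (mdet (proj Z) (Vs n))^2) \<longlonglongrightarrow> (mdet (proj Z) W)^2"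
      using r unfolding q tendsto_cong[OF e1] .
    have s2: "(\<lambda>n. sqrt ((mdet (proj Z) (Vs n))^2)) \<longlonglongrightarrow> sqrt ((mdet (proj Z) W)^2)"
      using s1 by (rule tendsto_real_sqrt)
    have ev2: "\<forall>\<^sub>F n in sequentially. sqrt ((mdet (proj Z) (Vs n))^2) = mdet (proj Z) (Vs n)"
      using evD by (rule eventually_mono) (use mnn in simp)
    have sq: "sqrt ((mdet (proj Z) W)^2) = mdet (proj Z) W" using mnn[OF W] by simp
    have t2: "(\<lambda>n. mdet (proj Z) (Vs n)) \<longlonglongrightarrow> mdet (proj Z) W"
      using s2 unfolding sq tendsto_cong[OF ev2] .
    have ev3: "\<forall>\<^sub>F n in sequentially. mdet (proj Z) (Vs n) = mdet (proj (Vs n)) Z"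
      using evD by (rule eventually_mono) (use F_sym Z k in blast)
    have "(\<lambda>n. mdet (proj (Vs n)) Z) \<longlonglongrightarrow> mdet (proj Z) W"
      using t2 unfolding tendsto_cong[OF ev3] .
    then show ?thesis using F_sym[OF W Z k] by simp
  qed
  ultimately show ?thesis by blast
qed



locale absF =
  fixes G D :: "'g set" and F :: "'g \<Rightarrow> 'g \<Rightarrow> real"
  assumes Fnn: "\<And>V W. V\<in>G \<Longrightarrow> W\<in>G \<Longrightarrow> 0 \<le> F V W"
    and Fsym: "\<And>V W. V\<in>G \<Longrightarrow> W\<in>G \<Longrightarrow> F V W = F W V"
    and Frefl: "\<And>V. V\<in>G \<Longrightarrow> F V V = 1"
    and Finj: "\<And>V W. V\<in>G \<Longrightarrow> W\<in>G \<Longrightarrow> F V W = 1 \<Longrightarrow> V = W"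
    and Dc: "countable D" and DG: "D \<subseteq> G"
    and appr: "\<And>W. W\<in>G \<Longrightarrow> \<exists>Vs. (\<forall>\<^sub>F n in sequentially. Vs n \<in> D) \<and>
                  (\<forall>Z\<in>G. (\<lambda>n. F (Vs n) Z) \<longlonglongrightarrow> F W Z)"
begin

lemma pw_lim:
  assumes "W \<in> G" "W1 \<in> G" "W2 \<in> G" "\<forall>V\<in>D. a1 * F V W1 = a2 * F V W2"
  shows "a1 * F W W1 = a2 * F W W2"
proof -
  obtain Vs where Vs: "\<forall>\<^sub>F n in sequentially. Vs n \<in> D" "\<forall>Z\<in>G. (\<lambda>n. F (Vs n) Z) \<longlonglongrightarrow> F W Z"
    using appr[OF assms(1)] by blast
  have l1: "(\<lambda>n. a1 * F (Vs n) W1) \<longlonglongrightarrow> a1 * F W W1"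
    using Vs(2) assms(2) by (intro tendsto_mult_left) auto
  have l2: "(\<lambda>n. a2 * F (Vs n) W2) \<longlonglongrightarrow> a2 * F W W2"
    using Vs(2) assms(3) by (intro tendsto_mult_left) auto
  have ev: "\<forall>\<^sub>F n in sequentially. a1 * F (Vs n) W1 = a2 * F (Vs n) W2"
    using Vs(1) by (rule eventually_mono) (use assms(4) in blast)
  have "(\<lambda>n. a2 * F (Vs n) W2) \<longlonglongrightarrow> a1 * F W W1"
    using l1 unfolding tendsto_cong[OF ev] .
  then show ?thesis using l2 LIMSEQ_unique by blast
qed

lemma pw:
  assumes "W1 \<in> G" "W2 \<in> G" "0 \<le> a1" "0 \<le> a2" "\<forall>V\<in>D. a1 * F V W1 = a2 * F V W2"
  shows "a1 = a2 \<and> (a1 \<noteq> 0 \<longrightarrow> W1 = W2)"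
proof -
  define f where "f = F W1 W2"
  have 1: "a1 = a2 * f" using pw_lim[OF assms(1,1,2,5)] Frefl[OF assms(1)] unfolding f_def by simp
  have 2: "a1 * f = a2" using pw_lim[OF assms(2,1,2,5)] Frefl[OF assms(2)] Fsym[OF assms(1,2)]
    unfolding f_def by simp
  have f0: "f \<ge> 0" unfolding f_def using Fnn assms by auto
  show ?thesis
  proof (cases "a1 = 0")
    case True then show ?thesis using 2 by simp
  next
    case False
    have "a1 = (a1 * f) * f" using 1 2 by simp
    then have "a1 = a1 * (f * f)" by (simp add: mult.assoc)
    then have "f * f = 1" using False by simp
    then have "f = 1" using f0 by (metis mult_cancel_left1 nle_le mult_le_cancel_left1 zero_less_one_class.zero_le_one
          less_le_not_le mult_left_mono)
    then show ?thesis using 2 Finj[OF assms(1,2)] f_def by simp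
  qed
qed

lemma pw_neq:
  assumes "W1 \<in> G" "W2 \<in> G" "W1 \<noteq> W2"
  shows "\<exists>V\<in>D. F V W1 \<noteq> F V W2"
proof (rule ccontr)
  assume "\<not> ?thesis"
  then have "\<forall>V\<in>D. 1 * F V W1 = 1 * F V W2" by simp
  then show False using pw[OF assms(1,2), of 1 1] assms(3) by simp
qed

end

lemma sum_measure:
  fixes M1 M2 :: "'b measure"
  assumes sets: "sets M1 = sets M2" and sf1: "sigma_finite_measure M1" and sf2: "sigma_finite_measure M2"
  defines "mu \<equiv> measure_of (space M1) (sets M1) (\<lambda>A. emeasure M1 A + emeasure M2 A)"
  shows "sets mu = sets M1" "space mu = space M1"
    "\<And>A. A \<in> sets M1 \<Longrightarrow> emeasure mu A = emeasure M1 A + emeasure M2 A"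
    "sigma_finite_measure mu"
proof -
  show sm: "sets mu = sets M1" unfolding mu_def by (rule sets.sets_measure_of_eq)
  show sp: "space mu = space M1" unfolding mu_def by (rule sets.space_measure_of_eq)
  show em: "emeasure mu A = emeasure M1 A + emeasure M2 A" if "A \<in> sets M1" for A
  proof -
    have "countably_additive (sets M1) (\<lambda>A. emeasure M1 A + emeasure M2 A)"
    proof (rule countably_additiveI)
      fix A :: "nat \<Rightarrow> 'b set" assume "range A \<subseteq> sets M1" "disjoint_family A" "\<Union> (range A) \<in> sets M1"
      then show "(\<Sum>i. emeasure M1 (A i) + emeasure M2 (A i)) = emeasure M1 (\<Union> (range A)) + emeasure M2 (\<Union> (range A))"
        using sets by (simp add: suminf_add[symmetric] suminf_emeasure)
    qed
    moreover have "positive (sets M1) (\<lambda>A. emeasure M1 A + emeasure M2 A)"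
      unfolding positive_def by simp
    ultimately show ?thesis
      unfolding mu_def using that
      by (subst emeasure_measure_of[where A="sets M1" and \<Omega>="space M1"])
         (auto simp: sets.sigma_sets_eq sets.space_closed)
  qed
  obtain A :: "nat \<Rightarrow> 'b set" where A: "range A \<subseteq> sets M1" "(\<Union>i. A i) = space M1" "\<And>i. emeasure M1 (A i) \<noteq> \<infinity>"
    using sigma_finite_measure.sigma_finite[OF sf1] by metis
  obtain B :: "nat \<Rightarrow> 'b set" where B: "range B \<subseteq> sets M2" "(\<Union>i. B i) = space M2" "\<And>i. emeasure M2 (B i) \<noteq> \<infinity>"
    using sigma_finite_measure.sigma_finite[OF sf2] by metis
  have sp2: "space M2 = space M1" using sets_eq_imp_space_eq[OF sets] by simp
  show "sigma_finite_measure mu"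
  proof
    show "\<exists>C. countable C \<and> C \<subseteq> sets mu \<and> \<Union> C = space mu \<and> (\<forall>a\<in>C. emeasure mu a \<noteq> \<infinity>)"
    proof (intro exI[of _ "(\<lambda>(i,j). A i \<inter> B j) ` UNIV"] conjI ballI)
      show "countable ((\<lambda>(i, j). A i \<inter> B j) ` UNIV)" by simp
      show "(\<lambda>(i, j). A i \<inter> B j) ` UNIV \<subseteq> sets mu" using A(1) B(1) sets sm by auto
      show "\<Union> ((\<lambda>(i, j). A i \<inter> B j) ` UNIV) = space mu"
      proof
        show "\<Union> ((\<lambda>(i, j). A i \<inter> B j) ` UNIV) \<subseteq> space mu" using A(2) sp by auto
        show "space mu \<subseteq> \<Union> ((\<lambda>(i, j). A i \<inter> B j) ` UNIV)"
        proof
          fix x assume "x \<in> space mu"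
          then have "x \<in> (\<Union>i. A i)" "x \<in> (\<Union>i. B i)" using A(2) B(2) sp sp2 by auto
          then obtain i j where "x \<in> A i" "x \<in> B j" by blast
          then show "x \<in> \<Union> ((\<lambda>(i, j). A i \<inter> B j) ` UNIV)" by blast
        qed
      qed
      fix a assume "a \<in> (\<lambda>(i, j). A i \<inter> B j) ` UNIV"
      then obtain i j where a: "a = A i \<inter> B j" by auto
      have aS: "a \<in> sets M1" using a A(1) B(1) sets by auto
      have "emeasure M1 a \<le> emeasure M1 (A i)" using a A(1) by (intro emeasure_mono) auto
      then have 1: "emeasure M1 a \<noteq> \<infinity>" using A(3)[of i] by (metis infinity_ennreal_def top_unique)
      have "emeasure M2 a \<le> emeasure M2 (B j)" using a B(1) by (intro emeasure_mono) auto
      then have 2: "emeasure M2 a \<noteq> \<infinity>" using B(3)[of j] by (metis infinity_ennreal_def top_unique)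
      show "emeasure mu a \<noteq> \<infinity>" using em[OF aS] 1 2 by simp
    qed
  qed
qed


lemma (in absF) main_abs:
  fixes M1 M2 :: "'b measure" and T1 T2 :: "'b \<Rightarrow> 'g"
  assumes sets: "sets M1 = sets M2" and sf1: "sigma_finite_measure M1" and sf2: "sigma_finite_measure M2"
    and T1: "\<And>x. x \<in> space M1 \<Longrightarrow> T1 x \<in> G" and T2: "\<And>x. x \<in> space M1 \<Longrightarrow> T2 x \<in> G"
    and m1: "\<And>V. V \<in> G \<Longrightarrow> (\<lambda>x. F V (T1 x)) \<in> borel_measurable M1"
    and m2: "\<And>V. V \<in> G \<Longrightarrow> (\<lambda>x. F V (T2 x)) \<in> borel_measurable M2"
    and hyp: "\<And>V A. V \<in> G \<Longrightarrow> A \<in> sets M1 \<Longrightarrow>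
       (\<integral>\<^sup>+x\<in>A. ennreal (F V (T1 x)) \<partial>M1) = (\<integral>\<^sup>+x\<in>A. ennreal (F V (T2 x)) \<partial>M2)"
  shows "M1 = M2 \<and> {x \<in> space M1. T1 x \<noteq> T2 x} \<in> null_sets M1"
proof -
  define mu where "mu = measure_of (space M1) (sets M1) (\<lambda>A. emeasure M1 A + emeasure M2 A)"
  note sm = sum_measure[OF sets sf1 sf2, folded mu_def]
  interpret mu: sigma_finite_measure mu by (rule sm(4))
  have sp2: "space M2 = space M1" using sets_eq_imp_space_eq[OF sets] by simp
  have ac1: "absolutely_continuous mu M1"
    unfolding absolutely_continuous_def
  proof
    fix A assume "A \<in> null_sets mu"
    then have As: "A \<in> sets M1" using sm(1) by auto
    then have "emeasure M1 A + emeasure M2 A = 0" using sm(3)[OF As] \<open>A \<in> null_sets mu\<close> by auto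
    then show "A \<in> null_sets M1" using As by auto
  qed
  have ac2: "absolutely_continuous mu M2"
    unfolding absolutely_continuous_def
  proof
    fix A assume "A \<in> null_sets mu"
    then have As: "A \<in> sets M1" using sm(1) by auto
    then have "emeasure M1 A + emeasure M2 A = 0" using sm(3)[OF As] \<open>A \<in> null_sets mu\<close> by auto
    then show "A \<in> null_sets M2" using As sets by auto
  qed
  define g1 where "g1 = RN_deriv mu M1"
  define g2 where "g2 = RN_deriv mu M2"
  have g1m: "g1 \<in> borel_measurable mu" and g2m: "g2 \<in> borel_measurable mu" unfolding g1_def g2_def by auto
  have d1: "density mu g1 = M1" unfolding g1_def using ac1 sm sets by (intro mu.density_RN_deriv) auto
  have d2: "density mu g2 = M2" unfolding g2_def using ac2 sm sets by (intro mu.density_RN_deriv) auto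
  have f1: "AE x in mu. g1 x \<noteq> \<infinity>" unfolding g1_def using sf1 ac1 sm by (intro mu.RN_deriv_finite) auto
  have f2: "AE x in mu. g2 x \<noteq> \<infinity>" unfolding g2_def using sf2 ac2 sm sets by (intro mu.RN_deriv_finite) auto
  have mm1: "(\<lambda>x. F V (T1 x)) \<in> borel_measurable mu" if "V \<in> G" for V
    using m1[OF that] by (subst measurable_cong_sets[OF sm(1), of borel borel]) simp_all
  have mm2: "(\<lambda>x. F V (T2 x)) \<in> borel_measurable mu" if "V \<in> G" for V
    using m2[OF that] by (subst measurable_cong_sets[OF sm(1)[unfolded sets], of borel borel]) simp_all
  have aeV: "AE x in mu. g1 x * ennreal (F V (T1 x)) = g2 x * ennreal (F V (T2 x))" if V: "V \<in> G" for V
  proof (rule mu.density_unique2)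
    show "(\<lambda>x. g1 x * ennreal (F V (T1 x))) \<in> borel_measurable mu" using g1m mm1[OF V] by measurable
    show "(\<lambda>x. g2 x * ennreal (F V (T2 x))) \<in> borel_measurable mu" using g2m mm2[OF V] by measurable
    fix A assume A: "A \<in> sets mu"
    have "(\<integral>\<^sup>+x\<in>A. g1 x * ennreal (F V (T1 x)) \<partial>mu) = (\<integral>\<^sup>+x\<in>A. ennreal (F V (T1 x)) \<partial>M1)"
      unfolding d1[symmetric] using A g1m mm1[OF V]
      by (subst nn_integral_density) (auto simp: mult_ac)
    also have "\<dots> = (\<integral>\<^sup>+x\<in>A. ennreal (F V (T2 x)) \<partial>M2)" using hyp[OF V, of A] A sm(1) by simp
    also have "\<dots> = (\<integral>\<^sup>+x\<in>A. g2 x * ennreal (F V (T2 x)) \<partial>mu)"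
      unfolding d2[symmetric] using A g2m mm2[OF V]
      by (subst nn_integral_density) (auto simp: mult_ac)
    finally show "(\<integral>\<^sup>+x\<in>A. g1 x * ennreal (F V (T1 x)) \<partial>mu) = (\<integral>\<^sup>+x\<in>A. g2 x * ennreal (F V (T2 x)) \<partial>mu)" .
  qed
  have aeD: "AE x in mu. \<forall>V\<in>D. g1 x * ennreal (F V (T1 x)) = g2 x * ennreal (F V (T2 x))"
    using aeV DG by (subst AE_ball_countable[OF Dc]) auto
  have key: "AE x in mu. g1 x = g2 x \<and> (g1 x \<noteq> 0 \<longrightarrow> T1 x = T2 x)"
    using aeD f1 f2 AE_space
  proof (eventually_elim)
    case (elim x)
    show ?case
    proof -
      have W: "T1 x \<in> G" "T2 x \<in> G" using T1 T2 sm elim(4) by auto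
      define a1 where "a1 = enn2real (g1 x)"
      define a2 where "a2 = enn2real (g2 x)"
      have ga: "g1 x = ennreal a1" "g2 x = ennreal a2" "a1 \<ge> 0" "a2 \<ge> 0"
        using elim(2,3) unfolding a1_def a2_def by (auto simp: less_top)
      have "\<forall>V\<in>D. a1 * F V (T1 x) = a2 * F V (T2 x)"
      proof
        fix V assume "V \<in> D"
        then have "ennreal a1 * ennreal (F V (T1 x)) = ennreal a2 * ennreal (F V (T2 x))"
          using elim(1) ga by auto
        moreover have "F V (T1 x) \<ge> 0" "F V (T2 x) \<ge> 0" using Fnn \<open>V \<in> D\<close> DG W by auto
        ultimately show "a1 * F V (T1 x) = a2 * F V (T2 x)"
          using ga by (simp add: ennreal_mult[symmetric])
      qed
      then have "a1 = a2 \<and> (a1 \<noteq> 0 \<longrightarrow> T1 x = T2 x)" using pw[OF W ga(3,4)] by blast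
      then show ?thesis using ga by auto
    qed
  qed
  have g: "AE x in mu. g1 x = g2 x" using key by auto
  have eq: "M1 = M2" using density_cong[OF g1m g2m g] d1 d2 by simp
  define S where "S = {x \<in> space M1. T1 x \<noteq> T2 x}"
  have S: "S = (\<Union>V\<in>D. {x \<in> space M1. F V (T1 x) \<noteq> F V (T2 x)})"
  proof
    show "S \<subseteq> (\<Union>V\<in>D. {x \<in> space M1. F V (T1 x) \<noteq> F V (T2 x)})"
    proof
      fix x assume "x \<in> S"
      then have "x \<in> space M1" "T1 x \<noteq> T2 x" unfolding S_def by auto
      then obtain V where "V \<in> D" "F V (T1 x) \<noteq> F V (T2 x)" using pw_neq T1 T2 by blast
      then show "x \<in> (\<Union>V\<in>D. {x \<in> space M1. F V (T1 x) \<noteq> F V (T2 x)})" using \<open>x \<in> space M1\<close> by auto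
    qed
  qed (auto simp: S_def)
  have Ss: "S \<in> sets M1"
    unfolding S
  proof (rule sets.countable_UN''[OF Dc])
    fix V assume "V \<in> D"
    then have V: "V \<in> G" using DG by auto
    note [measurable] = m1[OF V]
    have m2': "(\<lambda>x. F V (T2 x)) \<in> borel_measurable M1"
      using m2[OF V] by (subst measurable_cong_sets[OF sets, of borel borel]) simp_all
    note [measurable] = m2'
    show "{x \<in> space M1. F V (T1 x) \<noteq> F V (T2 x)} \<in> sets M1" by measurable
  qed
  have "emeasure M1 S = (\<integral>\<^sup>+x\<in>S. g1 x \<partial>mu)"
    using d1 emeasure_density[OF g1m, of S] Ss sm(1) by simp
  also have "\<dots> = 0"
  proof (subst nn_integral_0_iff_AE)
    show "(\<lambda>x. g1 x * indicator S x) \<in> borel_measurable mu" using g1m Ss sm(1) by measurable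
    show "AE x in mu. g1 x * indicator S x = 0"
      using key by eventually_elim (auto simp: S_def indicator_def)
  qed
  finally have "S \<in> null_sets M1" using Ss by auto
  then show ?thesis using eq unfolding S_def by simp
qed



lemma part1:
  fixes k :: nat and M1 M2 :: "'b measure"
    and T1 T2 :: "'b \<Rightarrow> ('a::{real_inner,second_countable_topology}) set"
  assumes k: "k \<ge> 1" and sets: "sets M1 = sets M2"
    and sf1: "sigma_finite_measure M1" and sf2: "sigma_finite_measure M2"
    and T1: "T1 \<in> M1 \<rightarrow>\<^sub>M grass_measure k" and T2: "T2 \<in> M2 \<rightarrow>\<^sub>M grass_measure k"
    and hyp: "\<forall>V\<in>(grass k :: 'a set set). \<forall>A\<in>sets M1.
             (\<integral>\<^sup>+x\<in>A. ennreal (mdet (proj V) (T1 x)) \<partial>M1)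
             = (\<integral>\<^sup>+x\<in>A. ennreal (mdet (proj V) (T2 x)) \<partial>M2)"
  shows "M1 = M2 \<and> {x \<in> space M1. T1 x \<noteq> T2 x} \<in> null_sets M1"
proof -
  interpret absF "grass k :: 'a set set" "Dset k :: 'a set set" "\<lambda>V W. mdet (proj V) W"
  proof (unfold_locales)
    fix V W :: "'a set" assume V: "V \<in> grass k" and W: "W \<in> grass k"
    show "0 \<le> mdet (proj V) W" using mdet_eq[OF W] gd_proj_nonneg[OF V k] by simp
    show "mdet (proj V) W = mdet (proj W) V" by (rule F_sym[OF V W k])
    show "mdet (proj V) W = 1 \<Longrightarrow> V = W" by (rule F_inj[OF V W k])
  next
    fix V :: "'a set" assume V: "V \<in> grass k"
    show "mdet (proj V) V = 1" by (rule F_refl[OF V k])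
  next
    show "countable (Dset k)" by (rule Dset_countable)
    show "Dset k \<subseteq> grass k" by (rule Dset_grass)
  next
    fix W :: "'a set" assume W: "W \<in> grass k"
    show "\<exists>Vs. (\<forall>\<^sub>F n in sequentially. Vs n \<in> Dset k) \<and>
                  (\<forall>Z\<in>grass k. (\<lambda>n. mdet (proj (Vs n)) Z) \<longlonglongrightarrow> mdet (proj W) Z)"
      by (rule approx[OF W k])
  qed
  have sp: "space M2 = space M1" using sets_eq_imp_space_eq[OF sets] by simp
  show ?thesis
  proof (rule main_abs[OF sets sf1 sf2])
    fix x assume "x \<in> space M1"
    then show "T1 x \<in> grass k" using measurable_space[OF T1] grass_measure_space by blast
    show "T2 x \<in> grass k" using \<open>x \<in> space M1\<close> sp measurable_space[OF T2] grass_measure_space by blast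
  next
    fix V :: "'a set" assume V: "V \<in> grass k"
    show "(\<lambda>x. mdet (proj V) (T1 x)) \<in> borel_measurable M1" by (rule F_meas[OF V k T1])
    show "(\<lambda>x. mdet (proj V) (T2 x)) \<in> borel_measurable M2" by (rule F_meas[OF V k T2])
  next
    fix V :: "'a set" and A assume "V \<in> grass k" "A \<in> sets M1"
    then show "(\<integral>\<^sup>+x\<in>A. ennreal (mdet (proj V) (T1 x)) \<partial>M1) = (\<integral>\<^sup>+x\<in>A. ennreal (mdet (proj V) (T2 x)) \<partial>M2)"
      using hyp by blast
  qed
qed

theorem mainTheorem11:
  fixes k :: nat
    and M1 M2 :: "'b measure"
    and T1 T2 :: "'b \<Rightarrow> ('a::{real_inner,complete_space,second_countable_topology}) set"
  assumes "k \<ge> 1"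
  shows "(sets M1 = sets M2 \<and> sigma_finite_measure M1 \<and> sigma_finite_measure M2 \<and>
          T1 \<in> M1 \<rightarrow>\<^sub>M grass_measure k \<and> T2 \<in> M2 \<rightarrow>\<^sub>M grass_measure k \<and>
          (\<forall>V\<in>(grass k :: 'a set set). \<forall>A\<in>sets M1.
             (\<integral>\<^sup>+x\<in>A. ennreal (mdet (proj V) (T1 x)) \<partial>M1)
             = (\<integral>\<^sup>+x\<in>A. ennreal (mdet (proj V) (T2 x)) \<partial>M2))
          \<longrightarrow> M1 = M2 \<and> {x \<in> space M1. T1 x \<noteq> T2 x} \<in> null_sets M1)
       \<and> (\<forall>(R::'a set) mu1 mu2 S1 S2.
            pseudorectifiable k R \<and> pseudorect_pair k R mu1 S1 \<and> pseudorect_pair k R mu2 S2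
            \<longrightarrow> mu1 = mu2 \<and> {x \<in> R. S1 x \<noteq> S2 x} \<in> null_sets mu1)"
proof (rule conjI)
  show "sets M1 = sets M2 \<and> sigma_finite_measure M1 \<and> sigma_finite_measure M2 \<and>
          T1 \<in> M1 \<rightarrow>\<^sub>M grass_measure k \<and> T2 \<in> M2 \<rightarrow>\<^sub>M grass_measure k \<and>
          (\<forall>V\<in>(grass k :: 'a set set). \<forall>A\<in>sets M1.
             (\<integral>\<^sup>+x\<in>A. ennreal (mdet (proj V) (T1 x)) \<partial>M1)
             = (\<integral>\<^sup>+x\<in>A. ennreal (mdet (proj V) (T2 x)) \<partial>M2))
          \<longrightarrow> M1 = M2 \<and> {x \<in> space M1. T1 x \<noteq> T2 x} \<in> null_sets M1"
    using part1[OF assms] by blast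
next
  show "\<forall>(R::'a set) mu1 mu2 S1 S2.
            pseudorectifiable k R \<and> pseudorect_pair k R mu1 S1 \<and> pseudorect_pair k R mu2 S2
            \<longrightarrow> mu1 = mu2 \<and> {x \<in> R. S1 x \<noteq> S2 x} \<in> null_sets mu1"
  proof (intro allI impI)
  fix R :: "'a set" and mu1 mu2 S1 S2
  assume a: "pseudorectifiable k R \<and> pseudorect_pair k R mu1 S1 \<and> pseudorect_pair k R mu2 S2"
  then have p1: "pseudorect_pair k R mu1 S1" and p2: "pseudorect_pair k R mu2 S2" by auto
  note d1 = p1[unfolded pseudorect_pair_def] and d2 = p2[unfolded pseudorect_pair_def]
  have sets: "sets mu1 = sets mu2" using d1 d2 by simp
  have hyp: "\<forall>V\<in>(grass k :: 'a set set). \<forall>A\<in>sets mu1.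
             (\<integral>\<^sup>+x\<in>A. ennreal (mdet (proj V) (S1 x)) \<partial>mu1)
             = (\<integral>\<^sup>+x\<in>A. ennreal (mdet (proj V) (S2 x)) \<partial>mu2)"
  proof (intro ballI)
    fix V :: "'a set" and A assume V: "V \<in> grass k" and A: "A \<in> sets mu1"
    have A2: "A \<in> sets mu2" using A sets by simp
    have "(\<integral>\<^sup>+x\<in>A. ennreal (mdet (proj V) (S1 x)) \<partial>mu1)
        = (\<integral>\<^sup>+y. ecard (proj V -` {y} \<inter> A) \<partial>hausdorff_measure k)"
      using d1 V A by simp
    also have "\<dots> = (\<integral>\<^sup>+x\<in>A. ennreal (mdet (proj V) (S2 x)) \<partial>mu2)"
      using d2 V A2 by simp
    finally show "(\<integral>\<^sup>+x\<in>A. ennreal (mdet (proj V) (S1 x)) \<partial>mu1)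
             = (\<integral>\<^sup>+x\<in>A. ennreal (mdet (proj V) (S2 x)) \<partial>mu2)" .
  qed
  have "mu1 = mu2 \<and> {x \<in> space mu1. S1 x \<noteq> S2 x} \<in> null_sets mu1"
    by (rule part1[OF assms sets _ _ _ _ hyp]) (use d1 d2 in simp_all)
  moreover have "space mu1 = R" using d1 by simp
  ultimately show "mu1 = mu2 \<and> {x \<in> R. S1 x \<noteq> S2 x} \<in> null_sets mu1" by metis
  qed
qed


end
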